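(* Let $B_n=\{z\in\mathbb C^n:\|z\|^2<1\}$ be the unit ball. If $F$ is a strongly pseudoconvex complex Finsler metric on $B_n$ that is $\mathrm{Aut}(B_n)$-invariant, then there is a constant $c>0$ such that $$F^2(z,v)=c\,\frac{(1-\|z\|^2)\|v\|^2+|\langle z,v\rangle|^2}{(1-\|z\|^2)^2}\quad\text{for all }z\in B_n,\ v\in T^{1,0}_zB_n\cong\mathbb C^n,$$ i.e. $F$ is a constant multiple of the Poincaré–Bergman metric.
   Context: $\mathrm{Aut}(B_n)$ is the group of holomorphic automorphisms of $B_n$; $F$ is $\mathrm{Aut}(B_n)$-invariant if $F(f(z),f_\ast v)=F(z,v)$ for all $f\in\mathrm{Aut}(B_n)$ and $(z,v)\in T^{1,0}B_n$. A strongly pseudoconvex complex Finsler metric on a complex manifold $M$ is a continuous $F:T^{1,0}M\to[0,\infty)$ with $F(z,v)=0$ iff $v=0$, $G=F^2$ smooth off the zero section, $G(z,\lambda v)=|\lambda|^2G(z,v)$ for all $\lambda\in\mathbb C$, and $(\partial^2G/\partial v^\alpha\partial\bar v^\beta)$ positive definite off the zero section. $\langle z,v\rangle=\sum_i z^i\overline{v^i}$. *)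

theory Defs
  imports "HOL-Analysis.Analysis"
begin

text \<open>The unit ball B_n in C^n, with C^n modelled as complex^'n (n = CARD('n)).\<close>
definition unit_ball :: "(complex ^ 'n) set" where
  "unit_ball = {z. (norm z)^2 < 1}"

definition herm :: "complex ^ 'n \<Rightarrow> complex ^ 'n \<Rightarrow> complex" where
  "herm z v = (\<Sum>i\<in>UNIV. z $ i * cnj (v $ i))"

definition holo_on :: "(complex ^ 'n \<Rightarrow> complex ^ 'm) \<Rightarrow> (complex ^ 'n) set \<Rightarrow> bool" where
  "holo_on f U \<longleftrightarrow> (\<forall>z\<in>U. \<exists>L. (f has_derivative L) (at z) \<and> (\<forall>c v. L (c *s v) = c *s L v))"

definition aut_ball :: "(complex ^ 'n \<Rightarrow> complex ^ 'n) set" where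
  "aut_ball = {f. bij_betw f unit_ball unit_ball \<and> holo_on f unit_ball
                  \<and> holo_on (inv_into unit_ball f) unit_ball}"

fun iter_dd :: "'a::real_normed_vector list \<Rightarrow> ('a \<Rightarrow> real) \<Rightarrow> 'a \<Rightarrow> real" where
  "iter_dd [] g = g"
| "iter_dd (u # us) g = (\<lambda>x. deriv (\<lambda>t. iter_dd us g (x + t *\<^sub>R u)) 0)"

definition smooth_on :: "'a::real_normed_vector set \<Rightarrow> ('a \<Rightarrow> real) \<Rightarrow> bool" where
  "smooth_on S g \<longleftrightarrow> (\<forall>us. continuous_on S (iter_dd us g) \<and>
      (\<forall>x\<in>S. \<forall>u. (\<lambda>t. iter_dd us g (x + t *\<^sub>R u)) differentiable (at 0)))"

text \<open>Entry (a,b) of the complex Hessian  d^2 G / dv^a d(conj v^b)  of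
  G :: (z,v) \<mapsto> real at the point p, via Wirtinger derivatives
  d/dv^a = (d/dx_a - i d/dy_a)/2,  d/d(conj v^b) = (d/dx_b + i d/dy_b)/2, with v_a = x_a + i y_a.\<close>
definition levi_entry :: "((complex^'n) \<times> (complex^'n) \<Rightarrow> real) \<Rightarrow> (complex^'n) \<times> (complex^'n) \<Rightarrow> 'n \<Rightarrow> 'n \<Rightarrow> complex" where
  "levi_entry G p a b =
     (let xa = (0, axis a 1); ya = (0, axis a \<i>); xb = (0, axis b 1); yb = (0, axis b \<i>) in
      (complex_of_real (iter_dd [xa, xb] G p + iter_dd [ya, yb] G p)
       + \<i> * complex_of_real (iter_dd [xa, yb] G p - iter_dd [ya, xb] G p)) / 4)"

definition pos_def_herm :: "('n::finite \<Rightarrow> 'n \<Rightarrow> complex) \<Rightarrow> bool" where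
  "pos_def_herm H \<longleftrightarrow> (\<forall>a b. H a b = cnj (H b a)) \<and>
     (\<forall>\<xi>::complex^'n. \<xi> \<noteq> 0 \<longrightarrow> 0 < Re (\<Sum>a\<in>UNIV. \<Sum>b\<in>UNIV. H a b * \<xi> $ a * cnj (\<xi> $ b)))"

text \<open>Strongly pseudoconvex complex Finsler metric on B_n; F z v is F at (z,v), v \<in> T^{1,0}_z B_n = C^n.\<close>
definition spc_finsler :: "(complex^'n \<Rightarrow> complex^'n \<Rightarrow> real) \<Rightarrow> bool" where
  "spc_finsler F \<longleftrightarrow>
     continuous_on (unit_ball \<times> UNIV) (\<lambda>p. F (fst p) (snd p))
   \<and> (\<forall>z\<in>unit_ball. \<forall>v. F z v \<ge> 0)
   \<and> (\<forall>z\<in>unit_ball. \<forall>v. F z v = 0 \<longleftrightarrow> v = 0)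
   \<and> smooth_on {p. fst p \<in> unit_ball \<and> snd p \<noteq> 0} (\<lambda>p. (F (fst p) (snd p))^2)
   \<and> (\<forall>z\<in>unit_ball. \<forall>v. \<forall>c::complex. (F z (c *s v))^2 = (cmod c)^2 * (F z v)^2)
   \<and> (\<forall>z\<in>unit_ball. \<forall>v. v \<noteq> 0 \<longrightarrow>
        pos_def_herm (levi_entry (\<lambda>p. (F (fst p) (snd p))^2) (z, v)))"

definition aut_invariant :: "(complex^'n \<Rightarrow> complex^'n \<Rightarrow> real) \<Rightarrow> bool" where
  "aut_invariant F \<longleftrightarrow>
     (\<forall>f\<in>aut_ball. \<forall>z\<in>unit_ball. \<forall>v. F (f z) (frechet_derivative f (at z) v) = F z v)"

end

theory Submission
  imports Defs
begin

lemma herm_add_left: "herm (x + y) z = herm x z + herm y z"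
  by (simp add: herm_def sum.distrib distrib_right)
lemma herm_diff_left: "herm (x - y) z = herm x z - herm y z"
  by (simp add: herm_def sum_subtractf left_diff_distrib)
lemma herm_scale_left: "herm (c *s x) z = c * herm x z"
  by (simp add: herm_def sum_distrib_left mult.assoc)
lemma herm_add_right: "herm z (x + y) = herm z x + herm z y"
  by (simp add: herm_def sum.distrib distrib_left)
lemma herm_diff_right: "herm z (x - y) = herm z x - herm z y"
  by (simp add: herm_def sum_subtractf right_diff_distrib)
lemma herm_scale_right: "herm z (c *s x) = cnj c * herm z x"
  by (simp add: herm_def sum_distrib_left mult.assoc mult.left_commute)
lemma herm_cnj: "cnj (herm x y) = herm y x"
  by (simp add: herm_def mult.commute)
lemma herm_neg_left: "herm (- x) z = - herm x z"
  by (simp add: herm_def sum_negf)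
lemma herm_neg_right: "herm z (- x) = - herm z x"
  by (simp add: herm_def sum_negf)
lemma herm_zero_left[simp]: "herm 0 y = 0" by (simp add: herm_def)
lemma herm_zero_right[simp]: "herm y 0 = 0" by (simp add: herm_def)

lemma norm_sq_vec: "(norm (x::complex^'n))^2 = (\<Sum>i\<in>UNIV. (cmod (x$i))^2)"
  unfolding norm_vec_def L2_set_def by (simp add: sum_nonneg)

lemma herm_self: "herm x x = complex_of_real ((norm x)^2)"
  unfolding norm_sq_vec herm_def of_real_sum
  by (rule sum.cong[OF refl]) (metis complex_norm_square of_real_power)

lemma herm_cs: "cmod (herm x y) \<le> norm x * norm y"
proof -
  have "cmod (herm x y) \<le> (\<Sum>i\<in>UNIV. cmod (x$i) * cmod (y$i))"
    unfolding herm_def by (rule order_trans[OF norm_sum]) (simp add: norm_mult)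
  also have "\<dots> \<le> L2_set (\<lambda>i. cmod (x$i)) UNIV * L2_set (\<lambda>i. cmod (y$i)) UNIV"
    using L2_set_mult_ineq[of "\<lambda>i. cmod (x$i)" "\<lambda>i. cmod (y$i)" UNIV] by simp
  finally show ?thesis by (simp add: norm_vec_def)
qed

lemma norm_smult_vec: "norm ((c::complex) *s (v::complex^'n)) = cmod c * norm v"
  unfolding norm_vec_def by (simp add: norm_mult L2_set_right_distrib)

lemma bb_smult: "bounded_bilinear (\<lambda>(c::complex) (v::complex^'n). c *s v)"
  apply (rule bounded_bilinear.intro)
  apply (auto simp: vec_eq_iff algebra_simps)
  apply (rule exI[of _ 1]) apply (simp add: norm_smult_vec)
  done


lemma invol_scalar:
  fixes S p ai xi d e :: complex
  assumes "d * (1 - p) = 1" "e * (1 + S) = 1"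
  shows "ai - S * (d * (ai - S * xi - p * e * ai)) - (d * (1 - S^2 - p)) * e * ai = S^2 * d * xi"
  using assms by algebra

lemma herm_scalar:
  fixes S p e :: complex
  assumes "e * (1 + S) = 1"
  shows "(1 - S^2) - S * p - p * e * (1 - S^2) = (1 - S^2) - p"
  using assms by algebra

lemma norm_scalar:
  fixes S p b e cp :: complex
  assumes "e * (1 + S) = 1"
  shows "(1 - p) * (1 - cp) - ((1 - S^2) - S * p - cp * S + S^2 * b
     + S * (p * cp) * e  - (1 - S^2) * p * e
     + S * (p * cp) * e - (1 - S^2) * cp * e
     + (1 - S^2) * (p * cp) * e * e ) = S^2 * (1 - b)"
  using assms by algebra


definition sa :: "complex^'n \<Rightarrow> real" where "sa a = sqrt (1 - (norm a)^2)"

definition mob :: "complex^'n \<Rightarrow> complex^'n \<Rightarrow> complex^'n" where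
  "mob a x = inverse (1 - herm x a) *s
     (a - complex_of_real (sa a) *s x - (herm x a * inverse (1 + complex_of_real (sa a))) *s a)"

lemma ball_norm: "x \<in> unit_ball \<Longrightarrow> norm x < 1"
  unfolding unit_ball_def by (simp add: power_less_one_iff)

lemma sa_pos: "a \<in> unit_ball \<Longrightarrow> 0 < sa a"
  unfolding unit_ball_def sa_def by simp

lemma sa_sq: "a \<in> unit_ball \<Longrightarrow> complex_of_real (sa a) ^ 2 = 1 - complex_of_real ((norm a)^2)"
  unfolding unit_ball_def sa_def by (simp flip: of_real_power)

lemma herm_ne1: assumes "x \<in> unit_ball" "a \<in> unit_ball" shows "herm x a \<noteq> 1"
proof
  assume h: "herm x a = 1"
  have "cmod (herm x a) \<le> norm x * norm a" by (rule herm_cs)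
  also have "\<dots> < 1" using ball_norm[OF assms(1)] ball_norm[OF assms(2)]
    by (metis abs_norm_cancel abs_square_less_1 le_less_trans less_eq_real_def
        mult_left_le_one_le norm_ge_zero power2_eq_square)
  finally show False using h by simp
qed

lemma mob_herm:
  assumes "x \<in> unit_ball" "a \<in> unit_ball"
  shows "herm (mob a x) a = inverse (1 - herm x a) * ((1 - complex_of_real (sa a) ^ 2) - herm x a)"
proof -
  define S where "S = complex_of_real (sa a)"
  define p where "p = herm x a"
  define e where "e = inverse (1 + S)"
  have e: "e * (1 + S) = 1" unfolding e_def S_def using sa_pos[OF assms(2)]
    by (metis add_pos_pos field_class.field_inverse of_real_1 of_real_add of_real_eq_0_iff
        order_less_irrefl zero_less_one)
  have al: "herm a a = 1 - S^2" using sa_sq[OF assms(2)] unfolding S_def by (simp add: herm_self)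
  have "herm (mob a x) a = inverse (1 - p) * (herm a a - S * p - p * e * herm a a)"
    unfolding mob_def p_def S_def e_def herm_scale_left herm_diff_left
    by (simp add: algebra_simps)
  also have "\<dots> = inverse (1 - p) * ((1 - S^2) - p)"
    unfolding al using herm_scalar[OF e] by simp
  finally show ?thesis unfolding S_def p_def .
qed

lemma mob_comp:
  "mob a x $ i = inverse (1 - herm x a) *
     (a $ i - complex_of_real (sa a) * x $ i - herm x a * inverse (1 + complex_of_real (sa a)) * a $ i)"
  unfolding mob_def by (simp add: algebra_simps)

lemma mob_invol:
  assumes "x \<in> unit_ball" "a \<in> unit_ball"
  shows "mob a (mob a x) = x"
proof -
  define S where "S = complex_of_real (sa a)"
  define p where "p = herm x a"
  define e where "e = inverse (1 + S)"
  define d where "d = inverse (1 - p)"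
  have e: "e * (1 + S) = 1" unfolding e_def S_def using sa_pos[OF assms(2)]
    by (metis add_pos_pos field_class.field_inverse of_real_1 of_real_add of_real_eq_0_iff
        order_less_irrefl zero_less_one)
  have d: "d * (1 - p) = 1" unfolding d_def p_def using herm_ne1[OF assms] by simp
  have S0: "S \<noteq> 0" unfolding S_def using sa_pos[OF assms(2)] by simp
  have q: "herm (mob a x) a = d * (1 - S^2 - p)"
    using mob_herm[OF assms] unfolding S_def p_def d_def by simp
  have "1 - d * (1 - S^2 - p) = S^2 * d" using d by algebra
  then have q1: "inverse (1 - herm (mob a x) a) = inverse (S^2 * d)" using q by simp
  have dnz: "d \<noteq> 0" using d by auto
  show ?thesis
  proof (rule iffD2[OF vec_eq_iff], rule allI)
    fix i
    have w: "mob a x $ i = d * (a $ i - S * x $ i - p * e * a $ i)"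
      unfolding mob_comp S_def p_def e_def d_def by simp
    have "mob a (mob a x) $ i = inverse (S^2 * d) *
      (a $ i - S * (d * (a $ i - S * x $ i - p * e * a $ i)) - (d * (1 - S^2 - p)) * e * a $ i)"
      unfolding mob_comp[of a "mob a x"] q1 w[symmetric] q[symmetric]
      unfolding S_def e_def by simp
    also have "\<dots> = inverse (S^2 * d) * (S^2 * d * x $ i)"
      using invol_scalar[OF d e] by simp
    also have "\<dots> = x $ i" using S0 dnz by (simp add: field_simps)
    finally show "mob a (mob a x) $ i = x $ i" .
  qed
qed


lemma mob_normsq:
  assumes "x \<in> unit_ball" "a \<in> unit_ball"
  shows "(norm (mob a x))^2 = 1 - (cmod (inverse (1 - herm x a)))^2 * (sa a)^2 * (1 - (norm x)^2)"
proof -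
  define S where "S = complex_of_real (sa a)"
  define p where "p = herm x a"
  define e where "e = inverse (1 + S)"
  define d where "d = inverse (1 - p)"
  define b where "b = complex_of_real ((norm x)^2)"
  have e: "e * (1 + S) = 1" unfolding e_def S_def using sa_pos[OF assms(2)]
    by (metis add_pos_pos field_class.field_inverse of_real_1 of_real_add of_real_eq_0_iff
        order_less_irrefl zero_less_one)
  have d: "d * (1 - p) = 1" unfolding d_def p_def using herm_ne1[OF assms] by simp
  have cd: "cnj d * (1 - cnj p) = 1" using arg_cong[OF d, of cnj] by simp
  have cS: "cnj S = S" unfolding S_def by simp
  have ce: "cnj e = e" unfolding e_def S_def by simp
  have al: "herm a a = 1 - S^2" using sa_sq[OF assms(2)] unfolding S_def by (simp add: herm_self)
  have bb: "herm x x = b" unfolding b_def by (simp add: herm_self)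
  have pa: "herm a x = cnj p" unfolding p_def by (simp add: herm_cnj)
  have m: "mob a x = d *s (a - S *s x - (p * e) *s a)"
    unfolding mob_def S_def p_def e_def d_def by simp
  have "herm (mob a x) (mob a x) =
     d * cnj d * (herm a a - cnj S * herm a x - cnj (p * e) * herm a a
       - (S * herm x a - S * cnj S * herm x x - S * cnj (p*e) * herm x a)
       - (p * e * herm a a - p * e * cnj S * herm a x - p * e * cnj (p * e) * herm a a))"
    unfolding m herm_scale_left herm_scale_right herm_diff_left herm_diff_right
    by (simp add: algebra_simps)
  also have "\<dots> = d * cnj d * ((1 - S^2) - S * cnj p - cnj p * e * (1 - S^2)
       - (S * p - S * S * b - S * (cnj p * e) * p)
       - (p * e * (1 - S^2) - p * e * S * cnj p - p * e * (cnj p * e) * (1 - S^2)))"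
    unfolding al bb pa cS complex_cnj_mult ce p_def[symmetric] by simp
  also have "\<dots> = 1 - d * cnj d * S^2 * (1 - b)"
    using d cd e by algebra
  finally have h: "herm (mob a x) (mob a x) = 1 - d * cnj d * S^2 * (1 - b)" .
  have "complex_of_real ((norm (mob a x))^2) = complex_of_real (1 - (cmod d)^2 * (sa a)^2 * (1 - (norm x)^2))"
    unfolding herm_self[symmetric] h unfolding b_def S_def
    using complex_norm_square[of d] by (simp add: of_real_power)
  then show ?thesis unfolding d_def p_def by (simp only: of_real_eq_iff)
qed

lemma mob_ball:
  assumes "x \<in> unit_ball" "a \<in> unit_ball"
  shows "mob a x \<in> unit_ball"
proof -
  have "herm x a \<noteq> 1" by (rule herm_ne1[OF assms])
  then have "0 < (cmod (inverse (1 - herm x a)))^2" by simp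
  moreover have "0 < (sa a)^2" using sa_pos[OF assms(2)] by simp
  moreover have "0 < 1 - (norm x)^2" using assms(1) unfolding unit_ball_def by simp
  ultimately show ?thesis unfolding unit_ball_def using mob_normsq[OF assms]
    by (simp add: mult_pos_pos)
qed

lemma mob_bij:
  assumes "a \<in> unit_ball"
  shows "bij_betw (mob a) unit_ball unit_ball"
  by (rule bij_betw_byWitness[where f'="mob a"]) (auto simp: mob_invol mob_ball assms)


lemmas has_derivative_smult = bounded_bilinear.FDERIV[OF bb_smult]

lemma scaleR_smult: "r *\<^sub>R (x::complex^'n) = complex_of_real r *s x"
  by (simp add: vec_eq_iff scaleR_conv_of_real[where 'a=complex])

lemma bl_herm: "bounded_linear (\<lambda>x. herm x a)"
proof (rule bounded_linear_intro[where K="norm a"])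
  fix x y show "herm (x + y) a = herm x a + herm y a" by (rule herm_add_left)
next
  fix r x show "herm (r *\<^sub>R x) a = r *\<^sub>R herm x a"
    by (simp add: scaleR_smult herm_scale_left scaleR_conv_of_real)
next
  fix x show "norm (herm x a) \<le> norm x * norm a" by (rule herm_cs)
qed

lemma herm_has_derivative: "((\<lambda>x. herm x a) has_derivative (\<lambda>v. herm v a)) (at z within s)"
  by (rule bounded_linear_imp_has_derivative[OF bl_herm])

definition mobD :: "complex^'n \<Rightarrow> complex^'n \<Rightarrow> complex^'n \<Rightarrow> complex^'n" where
  "mobD a z v = inverse (1 - herm z a) *s
       (- (complex_of_real (sa a) *s v) - (herm v a * inverse (1 + complex_of_real (sa a))) *s a)
     + (inverse (1 - herm z a) * herm v a * inverse (1 - herm z a)) *s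
       (a - complex_of_real (sa a) *s z - (herm z a * inverse (1 + complex_of_real (sa a))) *s a)"

lemma mob_has_derivative:
  assumes "z \<in> unit_ball" "a \<in> unit_ball"
  shows "(mob a has_derivative mobD a z) (at z)"
proof -
  define S where "S = complex_of_real (sa a)"
  define e where "e = inverse (1 + S)"
  have mf: "mob a = (\<lambda>x. inverse (1 - herm x a) *s (a - S *s x - (herm x a * e) *s a))"
    unfolding mob_def S_def e_def by (rule ext) simp
  have D: "((\<lambda>x. inverse (1 - herm x a)) has_derivative
      (\<lambda>h. - (inverse (1 - herm z a) * (0 - herm h a) * inverse (1 - herm z a)))) (at z)"
    using herm_ne1[OF assms]
    by (intro Deriv.has_derivative_inverse has_derivative_diff has_derivative_const herm_has_derivative) simp
  have N: "((\<lambda>x. a - S *s x - (herm x a * e) *s a) has_derivative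
      (\<lambda>h. - (S *s h) - (herm h a * e) *s a)) (at z)"
    apply (rule has_derivative_eq_rhs)
    apply (rule has_derivative_diff)
    apply (rule has_derivative_diff)
    apply (rule has_derivative_const)
    apply (rule has_derivative_smult)
    apply (rule has_derivative_const)
    apply (rule has_derivative_ident)
    apply (rule has_derivative_smult)
    apply (rule has_derivative_mult)
    apply (rule herm_has_derivative)
    apply (rule has_derivative_const)
    apply (rule has_derivative_const)
    apply (simp add: fun_eq_iff vec_eq_iff)
    done
  have "(mob a has_derivative (\<lambda>h. inverse (1 - herm z a) *s (- (S *s h) - (herm h a * e) *s a)
     + (- (inverse (1 - herm z a) * (0 - herm h a) * inverse (1 - herm z a))) *s
        (a - S *s z - (herm z a * e) *s a))) (at z)"
    unfolding mf by (rule has_derivative_smult[OF D N])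
  then show ?thesis
    unfolding mobD_def S_def[symmetric] e_def[symmetric] by simp
qed


lemma unit_ball_eq: "unit_ball = ball (0::complex^'n) 1"
  unfolding unit_ball_def ball_def by (auto simp: dist_norm power_less_one_iff)

lemma open_unit_ball: "open unit_ball"
  unfolding unit_ball_eq by simp

lemma aut_invol:
  fixes f :: "complex^'n \<Rightarrow> complex^'n"
  assumes inv: "\<And>x. x \<in> unit_ball \<Longrightarrow> f x \<in> unit_ball \<and> f (f x) = x"
    and der: "\<And>z. z \<in> unit_ball \<Longrightarrow> (f has_derivative L z) (at z) \<and> (\<forall>c v. L z (c *s v) = c *s L z v)"
  shows "f \<in> aut_ball"
proof -
  have bij: "bij_betw f unit_ball unit_ball"
    by (rule bij_betw_byWitness[where f'=f]) (auto simp: inv)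
  have hol: "holo_on f unit_ball" unfolding holo_on_def using der by blast
  have ii: "inv_into unit_ball f y = f y" if "y \<in> unit_ball" for y
  proof -
    have "inj_on f unit_ball" using bij by (simp add: bij_betw_def)
    moreover have "f y \<in> unit_ball" "f (f y) = y" using inv[OF that] by auto
    ultimately show ?thesis by (simp add: inv_into_f_eq)
  qed
  have "holo_on (inv_into unit_ball f) unit_ball"
    unfolding holo_on_def
  proof
    fix z :: "complex^'n" assume z: "z \<in> unit_ball"
    have "(inv_into unit_ball f has_derivative L z) (at z)"
      by (rule has_derivative_transform_within_open[where f=f and s=unit_ball])
        (use der[OF z] z open_unit_ball ii in auto)
    then show "\<exists>L. (inv_into unit_ball f has_derivative L) (at z) \<and> (\<forall>c v. L (c *s v) = c *s L v)"
      using der[OF z] by blast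
  qed
  then show ?thesis unfolding aut_ball_def using bij hol by blast
qed

lemma mobD_linear: "mobD a z (c *s v) = c *s mobD a z v"
  unfolding mobD_def by (simp add: vec_eq_iff herm_scale_left algebra_simps)

lemma mob_aut: assumes "a \<in> unit_ball" shows "mob a \<in> aut_ball"
  by (rule aut_invol[where L="mobD a"]) (auto simp: mob_ball mob_invol assms mob_has_derivative mobD_linear)

lemma mob_zero: assumes "a \<in> unit_ball" shows "mob a a = 0"
proof -
  define S where "S = complex_of_real (sa a)"
  define e where "e = inverse (1 + S)"
  have e: "e * (1 + S) = 1" unfolding e_def S_def using sa_pos[OF assms]
    by (metis add_pos_pos field_class.field_inverse of_real_1 of_real_add of_real_eq_0_iff
        order_less_irrefl zero_less_one)
  have al: "herm a a = 1 - S^2" using sa_sq[OF assms] unfolding S_def by (simp add: herm_self)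
  have "1 - S - (1 - S^2) * e = 0" using e by algebra
  then have "\<forall>i. a $ i - S * a $ i - (1 - S^2) * e * a $ i = 0"
    by (metis left_diff_distrib mult_1 mult_zero_left)
  then show ?thesis unfolding vec_eq_iff mob_comp S_def[symmetric] e_def[symmetric] al
    by (simp add: herm_self flip: al)
qed

lemma frechet_mob: assumes "a \<in> unit_ball"
  shows "frechet_derivative (mob a) (at a) = mobD a a"
  using frechet_derivative_at[OF mob_has_derivative[OF assms assms]] by simp


lemma mobD_norm:
  assumes "a \<in> unit_ball"
  shows "(norm (mobD a a v))^2 = ((1 - (norm a)^2) * (norm v)^2 + (cmod (herm a v))^2) / (1 - (norm a)^2)^2"
proof -
  define S where "S = complex_of_real (sa a)"
  define e where "e = inverse (1 + S)"
  define k where "k = inverse (1 - herm a a)"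
  define q where "q = herm v a"
  define b where "b = complex_of_real ((norm v)^2)"
  define N where "N = a - S *s a - (herm a a * e) *s a"
  have e: "e * (1 + S) = 1" unfolding e_def S_def using sa_pos[OF assms]
    by (metis add_pos_pos field_class.field_inverse of_real_1 of_real_add of_real_eq_0_iff
        order_less_irrefl zero_less_one)
  have al: "herm a a = 1 - S^2" using sa_sq[OF assms] unfolding S_def by (simp add: herm_self)
  have S0: "S \<noteq> 0" unfolding S_def using sa_pos[OF assms] by simp
  have k: "k * S^2 = 1" unfolding k_def al using S0 by simp
  have cS: "cnj S = S" unfolding S_def by simp
  have ce: "cnj e = e" unfolding e_def S_def by simp
  have ck: "cnj k = k" unfolding k_def herm_self by simp
  have bb: "herm v v = b" unfolding b_def by (simp add: herm_self)
  have qa: "herm a v = cnj q" unfolding q_def by (simp add: herm_cnj)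
  have "k *s N = 0" using mob_zero[OF assms] unfolding mob_def k_def N_def S_def e_def by simp
  moreover have "k \<noteq> 0" using k by auto
  ultimately have N0: "N = 0" by (simp add: vec_eq_iff)
  have w: "mobD a a v = k *s (- (S *s v) - (q * e) *s a)"
    unfolding mobD_def k_def[symmetric] S_def[symmetric] e_def[symmetric] N_def[symmetric] N0 q_def
    by simp
  have "herm (mobD a a v) (mobD a a v) = k * cnj k * (
      S * cnj S * herm v v + S * cnj (q * e) * herm v a + q * e * cnj S * herm a v
      + q * e * cnj (q * e) * herm a a)"
    unfolding w herm_scale_left herm_scale_right herm_diff_left herm_diff_right
      herm_add_left herm_add_right herm_neg_left herm_neg_right
    by (simp add: algebra_simps)
  also have "\<dots> = k * k * (S^2 * b + q * cnj q * (2 * S * e + e * e * (1 - S^2)))"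
    unfolding cS ce ck bb qa al complex_cnj_mult q_def[symmetric] by algebra
  also have "\<dots> = k * k * (S^2 * b + q * cnj q)"
  proof -
    have "2 * S * e + e * e * (1 - S^2) = 1" using e by algebra
    then show ?thesis by simp
  qed
  finally have h: "herm (mobD a a v) (mobD a a v) = k * k * (S^2 * b + q * cnj q)" .
  have r: "1 - (norm a)^2 = (sa a)^2" unfolding sa_def using assms unfolding unit_ball_def by simp
  have kk: "k = complex_of_real (inverse ((sa a)^2))"
    unfolding k_def herm_self r[symmetric] by simp
  have hq: "q * cnj q = complex_of_real ((cmod (herm a v))^2)"
    unfolding q_def by (metis complex_norm_square herm_cnj complex_mod_cnj)
  have "complex_of_real ((norm (mobD a a v))^2) = complex_of_real
     (inverse ((sa a)^2) * inverse ((sa a)^2) * ((sa a)^2 * (norm v)^2 + (cmod (herm a v))^2))"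
    unfolding herm_self[symmetric] h kk hq b_def S_def by (simp add: herm_self)
  then have "(norm (mobD a a v))^2 = inverse ((sa a)^2) * inverse ((sa a)^2) * ((sa a)^2 * (norm v)^2 + (cmod (herm a v))^2)"
    by (simp only: of_real_eq_iff)
  then show ?thesis unfolding r by (simp add: field_simps power2_eq_square)
qed

definition hh :: "complex^'n \<Rightarrow> complex^'n \<Rightarrow> complex^'n" where
  "hh u x = x - (herm x u * complex_of_real (2 / (norm u)^2)) *s u"

lemma hh_linear: "hh u (c *s x) = c *s hh u x"
  unfolding hh_def by (simp add: vec_eq_iff herm_scale_left algebra_simps)

lemma hh_has_derivative: "(hh u has_derivative hh u) (at z)"
proof -
  have "((\<lambda>x. x - (herm x u * complex_of_real (2 / (norm u)^2)) *s u) has_derivative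
         (\<lambda>h. h - (herm h u * complex_of_real (2 / (norm u)^2)) *s u)) (at z)"
    apply (rule has_derivative_eq_rhs)
    apply (rule has_derivative_diff)
    apply (rule has_derivative_ident)
    apply (rule has_derivative_smult)
    apply (rule has_derivative_mult)
    apply (rule herm_has_derivative)
    apply (rule has_derivative_const)
    apply (rule has_derivative_const)
    apply (simp add: fun_eq_iff vec_eq_iff)
    done
  then show ?thesis unfolding hh_def[abs_def] .
qed

lemma hh_herm: assumes "u \<noteq> 0" shows "herm (hh u x) u = - herm x u"
proof -
  have "complex_of_real (2 / (norm u)^2) * herm u u = 2"
    using assms by (simp add: herm_self)
  then have "herm x u - herm x u * complex_of_real (2 / (norm u)^2) * herm u u = - herm x u"
    by (simp only: mult.assoc) simp
  then show ?thesis unfolding hh_def herm_diff_left herm_scale_left .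
qed

lemma hh_invol: assumes "u \<noteq> 0" shows "hh u (hh u x) = x"
  using hh_herm[OF assms, of x] unfolding hh_def[of u "hh u x"]
  by (simp add: hh_def vec_eq_iff)

lemma hh_norm: assumes "u \<noteq> 0" shows "norm (hh u x) = norm x"
proof -
  define k where "k = complex_of_real (2 / (norm u)^2)"
  define p where "p = herm x u"
  have ku: "k * herm u u = 2" unfolding k_def using assms by (simp add: herm_self)
  have ck: "cnj k = k" unfolding k_def by simp
  have pa: "herm u x = cnj p" unfolding p_def by (simp add: herm_cnj)
  have "herm (hh u x) (hh u x) = herm x x - (cnj (p * k) * herm x u) - (p * k * herm u x - p * k * cnj (p * k) * herm u u)"
    unfolding hh_def k_def[symmetric] p_def[symmetric] herm_diff_left herm_diff_right herm_scale_left herm_scale_right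
    by (simp add: algebra_simps)
  also have "\<dots> = herm x x + p * cnj p * k * (k * herm u u - 2)"
    unfolding complex_cnj_mult ck pa p_def[symmetric] by algebra
  also have "\<dots> = herm x x" unfolding ku by simp
  finally have "complex_of_real ((norm (hh u x))^2) = complex_of_real ((norm x)^2)"
    by (simp add: herm_self)
  then have "(norm (hh u x))^2 = (norm x)^2" by (simp only: of_real_eq_iff)
  then show ?thesis by (simp add: power2_eq_iff_nonneg)
qed

lemma hh_aut: assumes "u \<noteq> 0" shows "hh u \<in> aut_ball"
  by (rule aut_invol[where L="\<lambda>z. hh u"])
     (auto simp: hh_invol hh_norm assms hh_has_derivative hh_linear unit_ball_def)

lemma hh_zero[simp]: "hh u 0 = 0" unfolding hh_def by simp

lemma hh_maps:
  assumes "norm v = norm w" "herm v w = complex_of_real r" "v \<noteq> w"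
  shows "hh (v - w) v = w"
proof -
  define u where "u = v - w"
  have u0: "u \<noteq> 0" using assms(3) unfolding u_def by simp
  have wv: "herm w v = complex_of_real r" using arg_cong[OF assms(2), of cnj] by (simp add: herm_cnj)
  have vu: "herm v u = complex_of_real ((norm v)^2 - r)"
    unfolding u_def herm_diff_right unfolding herm_self assms(2) by simp
  have uu: "herm u u = complex_of_real (2 * ((norm v)^2 - r))"
    unfolding u_def herm_diff_right herm_diff_left unfolding herm_self assms(2) wv assms(1) by simp
  have nu: "(norm u)^2 = 2 * ((norm v)^2 - r)" using uu by (simp only: herm_self of_real_eq_iff)
  have "(norm v)^2 - r \<noteq> 0" using nu u0 by auto
  then have t: "((norm v)^2 - r) * (2 / (2 * ((norm v)^2 - r))) = 1" by simp
  have "herm v u * complex_of_real (2 / (norm u)^2) = 1"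
    unfolding vu nu of_real_mult[symmetric] t by simp
  then show ?thesis unfolding hh_def u_def[symmetric] by (simp add: u_def)
qed


lemma zero_ball: "(0::complex^'n) \<in> unit_ball" unfolding unit_ball_def by simp

lemma F_homog:
  assumes "spc_finsler F" "z \<in> unit_ball"
  shows "F z (c *s v) = cmod c * F z v"
proof -
  have sq: "(F z (c *s v))^2 = (cmod c * F z v)^2"
    using assms unfolding spc_finsler_def by (simp add: power_mult_distrib)
  have "F z (c *s v) \<ge> 0" "F z v \<ge> 0" using assms unfolding spc_finsler_def by auto
  then show ?thesis using sq by (simp add: power2_eq_iff_nonneg)
qed

lemma F0_eq:
  fixes F :: "complex ^ 'n \<Rightarrow> complex ^ 'n \<Rightarrow> real"
  assumes sf: "spc_finsler F" and ai: "aut_invariant F" and nvw: "norm v = norm w"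
  shows "F 0 v = F 0 w"
proof -
  define h where "h = herm v w"
  define c where "c = (if h = 0 then 1 else h / complex_of_real (cmod h))"
  have c1: "cmod c = 1" unfolding c_def by (simp add: norm_divide)
  define w' where "w' = c *s w"
  have hw: "herm v w' = complex_of_real (cmod h)"
  proof (cases "h = 0")
    case True then show ?thesis unfolding w'_def c_def herm_scale_right h_def[symmetric] by simp
  next
    case False
    have "cnj h * h = complex_of_real ((cmod h)^2)" by (metis complex_norm_square mult.commute of_real_power)
    then show ?thesis using False unfolding w'_def c_def herm_scale_right h_def[symmetric]
      by (simp add: power2_eq_square field_simps)
  qed
  have nw: "norm w' = norm w" unfolding w'_def norm_smult_vec c1 by simp
  have Fw: "F 0 w' = F 0 w" unfolding w'_def F_homog[OF sf zero_ball] c1 by simp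
  have "F 0 w' = F 0 v"
  proof (cases "v = w'")
    case True then show ?thesis by simp
  next
    case False
    have u0: "v - w' \<noteq> 0" using False by simp
    have "F (hh (v - w') 0) (frechet_derivative (hh (v - w')) (at 0) v) = F 0 v"
      using ai hh_aut[OF u0] zero_ball unfolding aut_invariant_def by blast
    moreover have "frechet_derivative (hh (v - w')) (at 0) = hh (v - w')"
      using frechet_derivative_at[OF hh_has_derivative, of "v - w'" 0] by simp
    moreover have "hh (v - w') v = w'" using hh_maps[OF _ hw False] nw nvw by simp
    ultimately show ?thesis by simp
  qed
  then show ?thesis using Fw by simp
qed

lemma norm_axis_c: "norm (axis i (1::complex) :: complex^'n) = 1"
proof -
  have "(norm (axis i (1::complex) :: complex^'n))^2 = 1"
  proof -
    have eq: "(\<lambda>j. (cmod ((axis i (1::complex) :: complex^'n) $ j))^2) = (\<lambda>j. if j = i then 1 else 0)"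
      by (auto simp: axis_def)
    show ?thesis unfolding norm_sq_vec eq by simp
  qed
  then show ?thesis by (simp add: power2_eq_1_iff)
qed

theorem theorem1p2:
  fixes F :: "complex ^ 'n \<Rightarrow> complex ^ 'n \<Rightarrow> real"
  assumes "spc_finsler F"
    and "aut_invariant F"
  shows "\<exists>c>0. \<forall>z\<in>unit_ball. \<forall>v.
           (F z v)^2 = c * ((1 - (norm z)^2) * (norm v)^2 + (cmod (herm z v))^2)
                         / (1 - (norm z)^2)^2"
proof -
  define e :: "complex^'n" where "e = axis undefined 1"
  have ne: "norm e = 1" unfolding e_def by (rule norm_axis_c)
  have F0: "F 0 w = norm w * F 0 e" for w
  proof -
    have "norm (complex_of_real (norm w) *s e) = norm w" unfolding norm_smult_vec ne by simp
    then have "F 0 w = F 0 (complex_of_real (norm w) *s e)"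
      using F0_eq[OF assms] by metis
    also have "\<dots> = norm w * F 0 e" unfolding F_homog[OF assms(1) zero_ball] by simp
    finally show ?thesis .
  qed
  have pos: "F 0 e > 0"
  proof -
    have "F 0 e \<ge> 0" "F 0 e \<noteq> 0" using assms(1) zero_ball ne unfolding spc_finsler_def by auto
    then show ?thesis by simp
  qed
  show ?thesis
  proof (intro exI[of _ "(F 0 e)^2"] conjI ballI allI)
    show "(F 0 e)^2 > 0" using pos by simp
  next
    fix z v :: "complex^'n" assume z: "z \<in> unit_ball"
    have "F z v = F (mob z z) (frechet_derivative (mob z) (at z) v)"
      using assms(2) mob_aut[OF z] z unfolding aut_invariant_def by metis
    also have "\<dots> = F 0 (mobD z z v)" unfolding mob_zero[OF z] frechet_mob[OF z] ..
    also have "\<dots> = norm (mobD z z v) * F 0 e" by (rule F0)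
    finally have "(F z v)^2 = (norm (mobD z z v))^2 * (F 0 e)^2" by (simp add: power_mult_distrib)
    then show "(F z v)^2 = (F 0 e)^2 * ((1 - (norm z)^2) * (norm v)^2 + (cmod (herm z v))^2)
                         / (1 - (norm z)^2)^2"
      unfolding mobD_norm[OF z] by simp
  qed
qed

end
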